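(* Let $G = H\times N$ be a finite group that is the direct product of subgroups $H$ and $N$, and identify $G/N$ with $H$. Let $i\ge 2$. Then for every $\bar f\in\hat H^{-i}(G,\mathbb{Z})$ and every $\bar\psi\in\hat H^{i}(H,\mathbb{Z})$, $$\bar f\cup \mathrm{Inf}^G_H(\bar\psi) = \mathrm{Cor}^G_H\big(\mathrm{Rsd}^G_H(\bar f)\cup\bar\psi\big)\quad\text{in } \hat H^0(G,\mathbb{Z}),$$ where $\cup$ denotes the cup products $\hat H^{-i}(G,\mathbb{Z})\times\hat H^{i}(G,\mathbb{Z})\to\hat H^0(G,\mathbb{Z})$ and $\hat H^{-i}(H,\mathbb{Z})\times\hat H^{i}(H,\mathbb{Z})\to\hat H^0(H,\mathbb{Z})$, $\mathrm{Inf}^G_H\colon \hat H^i(H,\mathbb{Z})\to\hat H^i(G,\mathbb{Z})$ is inflation via $G\to G/N=H$, and $\mathrm{Cor}^G_H\colon\hat H^0(H,\mathbb{Z})\to\hat H^0(G,\mathbb{Z})$ is corestriction.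
   Context: $\mathbb{Z}$ carries trivial action and $\hat H^j$ denotes Tate cohomology. Tate cohomology of a finite group $G$ with coefficients in $A$ is computed from the complete standard complex $X$: for $j\ge0$, $X_j=\mathbb{Z}[G^{j+1}]$ (diagonal action, usual homogeneous differential); for $j\ge1$, $X_{-j}=\mathrm{Hom}_{\mathbb{Z}}(X_{j-1},\mathbb{Z})$, a free $\mathbb{Z}$-module with basis $(s_1^*,\dots,s_j^* )$, $s_k\in G$, the dual basis element of $(s_1,\dots,s_j)$, with action $g(s_1^*,\dots,s_j^* ) = ((gs_1)^*,\dots,(gs_j)^* )$; and $\hat H^j(G,A)=H^j(\mathrm{Hom}_G(X,A))$. Thus a class in $\hat H^{-i}(G,\mathbb{Z})$ is represented by a $G$-invariant cocycle $f$ on tuples $(s_1^*,\dots,s_i^* )$, $s_k\in G$. The residuation map $\mathrm{Rsd}^G_H\colon \hat H^{-i}(G,\mathbb{Z})\to \hat H^{-i}(H,\mathbb{Z})$ (for $i\ge2$, $G=H\times N$, $G/N\cong H$) is induced on cochains by $$\mathrm{Rsd}(f)(h_1^*,h_2^*,\dots,h_i^* ) = \sum_{n_2,\dots,n_i\in N} f\big(h_1^*,(h_2n_2)^*,\dots,(h_in_i)^*\big),\qquad h_k\in H.$$ (In general, for a normal subgroup $M\lhd G$, residuation $\hat H^{-i}(G,A)\to\hat H^{-i}(G/M,A/I_MA)$ is induced by $(\alpha^*,\alpha_2^*,\dots,\alpha_i^* )\mapsto \sum_{g_kM=\alpha_k,\,k\ge2} f(g^*,g_2^*,\dots,g_i^*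 )+I_MA$ with $g$ any single element of $\alpha$, where $I_M$ is the augmentation ideal of $\mathbb{Z}[M]$.) *)

theory Defs
  imports "HOL-Algebra.Coset"
begin

text \<open>Tate cohomology of a finite group with trivial coefficients in the integers,
computed from the complete standard complex X.  A cochain of degree q is a
G-invariant integer function on tuples: for q \<ge> 0 on (q+1)-tuples (s_0,...,s_q)
(basis of X_q = Z[G^(q+1)]), for q = -j < 0 on j-tuples (s_1,...,s_j) standing for
the dual basis element (s_1^*,...,s_j^*) of X_{-j}.\<close>

definition tuples :: "'a set \<Rightarrow> nat \<Rightarrow> 'a list set" where
  "tuples A n = {xs. set xs \<subseteq> A \<and> length xs = n}"

definition tate_arity :: "int \<Rightarrow> nat" where
  "tate_arity q = (if q \<ge> 0 then nat q + 1 else nat (- q))"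

definition tate_cochain :: "('a, 'b) monoid_scheme \<Rightarrow> int \<Rightarrow> ('a list \<Rightarrow> int) \<Rightarrow> bool" where
  "tate_cochain G q f \<longleftrightarrow>
     (\<forall>g\<in>carrier G. \<forall>xs\<in>tuples (carrier G) (tate_arity q).
        f (map (\<lambda>s. g \<otimes>\<^bsub>G\<^esub> s) xs) = f xs)"

text \<open>Coboundary: (delta f)(x) = f(d_{q+1} x) for a basis element x of X_{q+1}, where
  d_n (s_0..s_n) = sum_k (-1)^k (s_0..omit s_k..s_n)   for n \<ge> 1,
  d_0 (s) = sum_t t^*,
  d_{-j} (s_1^*..s_j^*) = sum_{k=0..j} (-1)^k sum_t (s_1..s_k, t, s_{k+1}..s_j)^*  (dual of d_j).\<close>
definition tate_coboundary :: "('a, 'b) monoid_scheme \<Rightarrow> int \<Rightarrow> ('a list \<Rightarrow> int) \<Rightarrow> 'a list \<Rightarrow> int" where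
  "tate_coboundary G q f xs =
     (if q \<ge> 0 then (\<Sum>k\<in>{0..Suc (nat q)}. (-1) ^ k * f (take k xs @ drop (Suc k) xs))
      else if q = -1 then (\<Sum>t\<in>carrier G. f [t])
      else (\<Sum>k\<in>{0..nat (- q - 1)}. (-1) ^ k * (\<Sum>t\<in>carrier G. f (take k xs @ t # drop k xs))))"

definition tate_cocycle :: "('a, 'b) monoid_scheme \<Rightarrow> int \<Rightarrow> ('a list \<Rightarrow> int) \<Rightarrow> bool" where
  "tate_cocycle G q f \<longleftrightarrow> tate_cochain G q f \<and>
     (\<forall>xs\<in>tuples (carrier G) (tate_arity (q + 1)). tate_coboundary G q f xs = 0)"

definition tate_cohomologous :: "('a, 'b) monoid_scheme \<Rightarrow> int \<Rightarrow> ('a list \<Rightarrow> int) \<Rightarrow> ('a list \<Rightarrow> int) \<Rightarrow> bool" where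
  "tate_cohomologous G q f g \<longleftrightarrow>
     (\<exists>c. tate_cochain G (q - 1) c \<and>
        (\<forall>xs\<in>tuples (carrier G) (tate_arity q). f xs - g xs = tate_coboundary G (q - 1) c xs))"

definition tate_class :: "('a, 'b) monoid_scheme \<Rightarrow> int \<Rightarrow> ('a list \<Rightarrow> int) \<Rightarrow> ('a list \<Rightarrow> int) set" where
  "tate_class G q f = {g. tate_cocycle G q g \<and> tate_cohomologous G q f g}"

text \<open>Cup product of degree (-i) x (i) -> 0 on cochains, via the diagonal component
X_0 -> X_{-i} (x) X_i,  s_0 |-> sum_{t_1..t_i} (t_1^*,...,t_i^*) (x) (t_i,...,t_1,s_0).\<close>
definition tate_cup :: "('a, 'b) monoid_scheme \<Rightarrow> nat \<Rightarrow> ('a list \<Rightarrow> int) \<Rightarrow> ('a list \<Rightarrow> int) \<Rightarrow> 'a list \<Rightarrow> int" where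
  "tate_cup G i f \<psi> xs = (\<Sum>ts\<in>tuples (carrier G) i. f ts * \<psi> (rev ts @ [hd xs]))"

definition dp_proj :: "('a, 'b) monoid_scheme \<Rightarrow> 'a set \<Rightarrow> 'a set \<Rightarrow> 'a \<Rightarrow> 'a" where
  "dp_proj G H N g = (THE h. h \<in> H \<and> (\<exists>n\<in>N. g = h \<otimes>\<^bsub>G\<^esub> n))"

definition tate_inf :: "('a, 'b) monoid_scheme \<Rightarrow> 'a set \<Rightarrow> 'a set \<Rightarrow> ('a list \<Rightarrow> int) \<Rightarrow> 'a list \<Rightarrow> int" where
  "tate_inf G H N \<psi> xs = \<psi> (map (dp_proj G H N) xs)"

definition tate_rsd :: "('a, 'b) monoid_scheme \<Rightarrow> 'a set \<Rightarrow> nat \<Rightarrow> ('a list \<Rightarrow> int) \<Rightarrow> 'a list \<Rightarrow> int" where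
  "tate_rsd G N i f hs =
     (\<Sum>ns\<in>tuples N (i - 1). f (hd hs # map2 (\<lambda>h n. h \<otimes>\<^bsub>G\<^esub> n) (tl hs) ns))"

text \<open>Corestriction in degree 0 (trivial coefficients): induced by the norm
N_{G/H}: Z^H -> Z^G, a |-> sum over the cosets of H of (sigma a) = [G:H] a,
where a degree-0 H-cochain is identified with its (constant) value.\<close>
definition tate_cor0 :: "('a, 'b) monoid_scheme \<Rightarrow> 'a set \<Rightarrow> ('a list \<Rightarrow> int) \<Rightarrow> 'a list \<Rightarrow> int" where
  "tate_cor0 G H \<phi> xs = (\<Sum>C\<in>rcosets\<^bsub>G\<^esub> H. \<phi> [\<one>\<^bsub>G\<^esub>])"

end

theory Submission
  imports Defs
begin

lemma finite_tuples: "finite A \<Longrightarrow> finite (tuples A n)"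
  unfolding tuples_def by (rule finite_lists_length_eq)

lemma tuples_Suc_sum:
  assumes "finite A"
  shows "(\<Sum>xs\<in>tuples A (Suc n). F xs) = (\<Sum>x\<in>A. \<Sum>xs\<in>tuples A n. F (x#xs))"
proof -
  have eq: "tuples A (Suc n) = (\<lambda>(x,xs). x#xs) ` (A \<times> tuples A n)"
    unfolding tuples_def by (auto simp: length_Suc_conv image_iff)
  have inj: "inj_on (\<lambda>(x,xs). x#xs) (A \<times> tuples A n)"
    by (auto simp: inj_on_def)
  show ?thesis
    unfolding eq sum.reindex[OF inj]
    by (simp add: sum.cartesian_product assms finite_tuples split_def)
qed

lemma tuples_map_bij:
  assumes "bij_betw \<phi> A A"
  shows "bij_betw (map \<phi>) (tuples A n) (tuples A n)"
proof -
  have b: "bij_betw (map \<phi>) (lists A) (lists A)" by (rule bij_lists[OF assms])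
  have "tuples A n = lists A \<inter> {xs. length xs = n}"
    unfolding tuples_def by auto
  moreover have "map \<phi> ` (lists A \<inter> {xs. length xs = n}) = lists A \<inter> {xs. length xs = n}"
  proof -
    have im: "map \<phi> ` lists A = lists A" using b by (simp add: bij_betw_def)
    show ?thesis
    proof (intro equalityI subsetI)
      fix ys assume "ys \<in> map \<phi> ` (lists A \<inter> {xs. length xs = n})"
      then show "ys \<in> lists A \<inter> {xs. length xs = n}" using im by auto
    next
      fix ys assume ys: "ys \<in> lists A \<inter> {xs. length xs = n}"
      then obtain xs where "xs \<in> lists A" "ys = map \<phi> xs" using im by blast
      then show "ys \<in> map \<phi> ` (lists A \<inter> {xs. length xs = n})" using ys by auto
    qed
  qed
  ultimately show ?thesis using b
    by (auto simp: bij_betw_def intro: inj_on_subset)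
qed

lemma sum_tuples_reindex:
  assumes "bij_betw \<phi> A A"
  shows "(\<Sum>xs\<in>tuples A n. F (map \<phi> xs)) = (\<Sum>xs\<in>tuples A n. F xs)"
  using sum.reindex_bij_betw[OF tuples_map_bij[OF assms], of F n] .

lemma class0_eq:
  assumes "\<And>x. x \<in> carrier G \<Longrightarrow> a [x] = b [x]"
  shows "tate_class G 0 a = tate_class G 0 b"
proof -
  have t1: "tuples (carrier G) (tate_arity 0) = (\<lambda>x. [x]) ` carrier G"
    by (auto simp: tuples_def tate_arity_def length_Suc_conv)
  have "tate_cohomologous G 0 a g = tate_cohomologous G 0 b g" for g
    unfolding tate_cohomologous_def t1 using assms by auto
  then show ?thesis unfolding tate_class_def by auto
qed


locale dprod = group G for G (structure) +
  fixes H N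
  assumes Hn: "H \<lhd> G" and Nn: "N \<lhd> G" and HN1: "H \<inter> N = {\<one>}"
    and HNG: "H <#> N = carrier G"
begin

lemma Hsub: "H \<subseteq> carrier G"
  using Hn normal_imp_subgroup subgroup.subset by blast
lemma Nsub: "N \<subseteq> carrier G"
  using Nn normal_imp_subgroup subgroup.subset by blast
lemma Hsg: "subgroup H G" using Hn normal_imp_subgroup by blast
lemma Nsg: "subgroup N G" using Nn normal_imp_subgroup by blast

lemma comm:
  assumes h: "h \<in> H" and n: "n \<in> N"
  shows "h \<otimes> n = n \<otimes> h"
proof -
  have hc: "h \<in> carrier G" "n \<in> carrier G" using h n Hsub Nsub by auto
  have "h \<otimes> n \<otimes> inv h \<in> N" using normal.inv_op_closed2[OF Nn hc(1) n] .
  then have c1: "h \<otimes> n \<otimes> inv h \<otimes> inv n \<in> N"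
    by (rule subgroup.m_closed[OF Nsg _ subgroup.m_inv_closed[OF Nsg n]])
  have "n \<otimes> inv h \<otimes> inv n \<in> H"
    by (rule normal.inv_op_closed2[OF Hn hc(2) subgroup.m_inv_closed[OF Hsg h]])
  then have "h \<otimes> (n \<otimes> inv h \<otimes> inv n) \<in> H"
    by (rule subgroup.m_closed[OF Hsg h])
  then have c2: "h \<otimes> n \<otimes> inv h \<otimes> inv n \<in> H"
    using hc by (simp add: m_assoc)
  have e: "h \<otimes> n \<otimes> inv h \<otimes> inv n = \<one>" using c1 c2 HN1 by blast
  have "inv n \<otimes> (n \<otimes> h) = h" using hc by (simp add: m_assoc[symmetric])
  then have "h \<otimes> n = (h \<otimes> n \<otimes> inv h \<otimes> inv n) \<otimes> (n \<otimes> h)"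
    using hc by (simp add: m_assoc)
  also have "\<dots> = n \<otimes> h" using e hc by simp
  finally show ?thesis .
qed

lemma decomp:
  assumes "g \<in> carrier G"
  obtains h n where "h \<in> H" "n \<in> N" "g = h \<otimes> n"
  using assms HNG unfolding set_mult_def by blast

lemma uniq:
  assumes "h \<in> H" "h' \<in> H" "n \<in> N" "n' \<in> N" "h \<otimes> n = h' \<otimes> n'"
  shows "h = h' \<and> n = n'"
proof -
  have c: "h \<in> carrier G" "h' \<in> carrier G" "n \<in> carrier G" "n' \<in> carrier G"
    using assms Hsub Nsub by auto
  have "inv h' \<otimes> h = inv h' \<otimes> (h \<otimes> n) \<otimes> inv n" using c by (simp add: m_assoc)
  also have "\<dots> = inv h' \<otimes> (h' \<otimes> n') \<otimes> inv n" using assms(5) by simp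
  also have "\<dots> = n' \<otimes> inv n" using c by (simp add: m_assoc[symmetric])
  finally have e: "inv h' \<otimes> h = n' \<otimes> inv n" .
  have "inv h' \<otimes> h \<in> H"
    by (rule subgroup.m_closed[OF Hsg subgroup.m_inv_closed[OF Hsg assms(2)] assms(1)])
  moreover have "n' \<otimes> inv n \<in> N"
    by (rule subgroup.m_closed[OF Nsg assms(4) subgroup.m_inv_closed[OF Nsg assms(3)]])
  ultimately have e1: "inv h' \<otimes> h = \<one>" and e2: "n' \<otimes> inv n = \<one>" using HN1 e by auto
  have "h = h' \<otimes> (inv h' \<otimes> h)" using c by (simp add: m_assoc[symmetric])
  then have 1: "h = h'" using e1 c by simp
  have "n' = (n' \<otimes> inv n) \<otimes> n" using c by (simp add: m_assoc)
  then have "n' = n" using e2 c by simp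
  then show ?thesis using 1 by simp
qed

lemma proj: assumes "h \<in> H" "n \<in> N" shows "dp_proj G H N (h \<otimes> n) = h"
  unfolding dp_proj_def
proof (rule the_equality)
  show "h \<in> H \<and> (\<exists>n'\<in>N. h \<otimes> n = h \<otimes> n')" using assms by blast
next
  fix h' assume a: "h' \<in> H \<and> (\<exists>n'\<in>N. h \<otimes> n = h' \<otimes> n')"
  then obtain n' where "n' \<in> N" "h \<otimes> n = h' \<otimes> n'" by blast
  then show "h' = h" using uniq[OF assms(1) _ assms(2)] a by blast
qed

lemma proj_in: assumes "g \<in> carrier G" shows "dp_proj G H N g \<in> H"
proof -
  obtain h n where "h \<in> H" "n \<in> N" "g = h \<otimes> n" using decomp assms by blast
  then show ?thesis using proj by simp
qed

lemma proj_H: assumes "h \<in> H" shows "dp_proj G H N h = h"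
proof -
  have "h = h \<otimes> \<one>" using assms Hsub by auto
  then show ?thesis using proj[OF assms subgroup.one_closed[OF Nsg]] by simp
qed

lemma proj_mult: assumes "h \<in> H" "g \<in> carrier G"
  shows "dp_proj G H N (h \<otimes> g) = h \<otimes> dp_proj G H N g"
proof -
  obtain h' n where hn: "h' \<in> H" "n \<in> N" "g = h' \<otimes> n" using decomp assms(2) by blast
  have c: "h \<in> carrier G" "h' \<in> carrier G" "n \<in> carrier G" using hn assms Hsub Nsub by auto
  have "h \<otimes> g = (h \<otimes> h') \<otimes> n" using hn c by (simp add: m_assoc)
  moreover have "h \<otimes> h' \<in> H" by (rule subgroup.m_closed[OF Hsg assms(1) hn(1)])
  ultimately show ?thesis using proj hn by simp
qed

lemma sum_G: "(\<Sum>g\<in>carrier G. F g) = (\<Sum>h\<in>H. \<Sum>n\<in>N. F (h \<otimes> n))"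
proof -
  have inj: "inj_on (\<lambda>(h,n). h \<otimes> n) (H \<times> N)"
  proof (rule inj_onI)
    fix p q assume "p \<in> H \<times> N" "q \<in> H \<times> N" "(\<lambda>(h,n). h \<otimes> n) p = (\<lambda>(h,n). h \<otimes> n) q"
    then show "p = q" using uniq by (cases p, cases q) auto
  qed
  have im: "(\<lambda>(h,n). h \<otimes> n) ` (H \<times> N) = carrier G"
  proof (intro equalityI subsetI)
    fix x assume "x \<in> (\<lambda>(h,n). h \<otimes> n) ` (H \<times> N)"
    then show "x \<in> carrier G" using Hsub Nsub by auto
  next
    fix x assume "x \<in> carrier G"
    then obtain h n where "h \<in> H" "n \<in> N" "x = h \<otimes> n" using decomp by blast
    then show "x \<in> (\<lambda>(h,n). h \<otimes> n) ` (H \<times> N)" by force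
  qed
  have "(\<Sum>g\<in>carrier G. F g) = (\<Sum>p\<in>H \<times> N. F (case p of (h,n) \<Rightarrow> h \<otimes> n))"
    using sum.reindex[OF inj, of F] im by simp
  also have "\<dots> = (\<Sum>h\<in>H. \<Sum>n\<in>N. F (h \<otimes> n))"
    by (simp add: sum.cartesian_product split_def)
  finally show ?thesis .
qed

lemma finH: "finite (carrier G) \<Longrightarrow> finite H" using Hsub finite_subset by blast
lemma finN: "finite (carrier G) \<Longrightarrow> finite N" using Nsub finite_subset by blast

lemma sum_tuples_G:
  assumes fin: "finite (carrier G)"
  shows "(\<Sum>ts\<in>tuples (carrier G) m. F ts)
       = (\<Sum>hs\<in>tuples H m. \<Sum>ns\<in>tuples N m. F (map2 (\<lambda>h n. h \<otimes> n) hs ns))"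
proof (induction m arbitrary: F)
  case 0
  have t0: "tuples A 0 = {[]}" for A :: "'a set" by (auto simp: tuples_def)
  show ?case by (simp add: t0)
next
  case (Suc m)
  have "(\<Sum>ts\<in>tuples (carrier G) (Suc m). F ts)
      = (\<Sum>g\<in>carrier G. \<Sum>ts\<in>tuples (carrier G) m. F (g # ts))"
    by (rule tuples_Suc_sum[OF fin])
  also have "\<dots> = (\<Sum>g\<in>carrier G. \<Sum>hs\<in>tuples H m. \<Sum>ns\<in>tuples N m.
                       F (g # map2 (\<lambda>h n. h \<otimes> n) hs ns))"
    using Suc.IH by simp
  also have "\<dots> = (\<Sum>h\<in>H. \<Sum>n\<in>N. \<Sum>hs\<in>tuples H m. \<Sum>ns\<in>tuples N m.
                       F ((h \<otimes> n) # map2 (\<lambda>h n. h \<otimes> n) hs ns))"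
    by (rule sum_G)
  also have "\<dots> = (\<Sum>h\<in>H. \<Sum>hs\<in>tuples H m. \<Sum>n\<in>N. \<Sum>ns\<in>tuples N m.
                       F ((h \<otimes> n) # map2 (\<lambda>h n. h \<otimes> n) hs ns))"
    by (rule sum.cong[OF refl], rule sum.swap)
  also have "\<dots> = (\<Sum>hs\<in>tuples H (Suc m). \<Sum>ns\<in>tuples N (Suc m).
                       F (map2 (\<lambda>h n. h \<otimes> n) hs ns))"
    by (simp add: tuples_Suc_sum[OF finH[OF fin]] tuples_Suc_sum[OF finN[OF fin]])
  finally show ?case .
qed

lemma shift:
  assumes "a \<in> N" "h \<in> H" "n \<in> N"
  shows "a \<otimes> (h \<otimes> n) = h \<otimes> (a \<otimes> n)"
proof -
  have c: "a \<in> carrier G" "h \<in> carrier G" "n \<in> carrier G" using assms Hsub Nsub by auto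
  have "a \<otimes> (h \<otimes> n) = (a \<otimes> h) \<otimes> n" using c by (simp add: m_assoc)
  also have "\<dots> = (h \<otimes> a) \<otimes> n" using comm[OF assms(2,1)] by simp
  also have "\<dots> = h \<otimes> (a \<otimes> n)" using c by (simp add: m_assoc)
  finally show ?thesis .
qed

lemma map_shift:
  assumes "a \<in> N" "set hs \<subseteq> H" "set ns \<subseteq> N"
  shows "map (\<lambda>x. a \<otimes> x) (map2 (\<lambda>h n. h \<otimes> n) hs ns)
       = map2 (\<lambda>h n. h \<otimes> n) hs (map (\<lambda>x. a \<otimes> x) ns)"
  using assms(2,3)
proof (induction hs arbitrary: ns)
  case Nil then show ?case by simp
next
  case (Cons h hs)
  then show ?case
  proof (cases ns)
    case Nil then show ?thesis by simp
  next
    case (Cons n ns')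
    then show ?thesis using Cons.prems Cons.IH shift[OF assms(1)] by simp
  qed
qed

lemma bij_mult_N:
  assumes "a \<in> N"
  shows "bij_betw (\<lambda>x. a \<otimes> x) N N"
proof (rule bij_betw_byWitness[where f' = "\<lambda>x. inv a \<otimes> x"])
  have c: "a \<in> carrier G" using assms Nsub by auto
  show "\<forall>x\<in>N. inv a \<otimes> (a \<otimes> x) = x" using c Nsub by (auto simp: m_assoc[symmetric])
  show "\<forall>x\<in>N. a \<otimes> (inv a \<otimes> x) = x" using c Nsub by (auto simp: m_assoc[symmetric])
  show "(\<lambda>x. a \<otimes> x) ` N \<subseteq> N" using subgroup.m_closed[OF Nsg assms] by auto
  show "(\<lambda>x. inv a \<otimes> x) ` N \<subseteq> N"
    using subgroup.m_closed[OF Nsg subgroup.m_inv_closed[OF Nsg assms]] by auto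
qed

lemma bij_mult_G:
  assumes "a \<in> carrier G"
  shows "bij_betw (\<lambda>x. a \<otimes> x) (carrier G) (carrier G)"
proof (rule bij_betw_byWitness[where f' = "\<lambda>x. inv a \<otimes> x"])
  show "\<forall>x\<in>carrier G. inv a \<otimes> (a \<otimes> x) = x" using assms by (auto simp: m_assoc[symmetric])
  show "\<forall>x\<in>carrier G. a \<otimes> (inv a \<otimes> x) = x" using assms by (auto simp: m_assoc[symmetric])
  show "(\<lambda>x. a \<otimes> x) ` carrier G \<subseteq> carrier G" using assms by auto
  show "(\<lambda>x. inv a \<otimes> x) ` carrier G \<subseteq> carrier G" using assms by auto
qed

lemma map2_in:
  assumes "set hs \<subseteq> H" "set ns \<subseteq> N" "length hs = length ns"
  shows "map2 (\<lambda>h n. h \<otimes> n) hs ns \<in> tuples (carrier G) (length hs)"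
  using assms
proof (induction hs arbitrary: ns)
  case Nil then show ?case by (simp add: tuples_def)
next
  case (Cons h hs)
  then obtain n ns' where ns: "ns = n # ns'" by (cases ns) auto
  have "h \<otimes> n \<in> carrier G" using Cons.prems ns Hsub Nsub by auto
  then show ?case using Cons.IH[of ns'] Cons.prems ns by (auto simp: tuples_def)
qed

lemma nsum:
  assumes fin: "finite (carrier G)"
    and inv: "\<forall>g\<in>carrier G. \<forall>xs\<in>tuples (carrier G) (Suc m). f (map (\<lambda>s. g \<otimes> s) xs) = f xs"
    and hs: "hs \<in> tuples H (Suc m)"
  shows "(\<Sum>ns\<in>tuples N (Suc m). f (map2 (\<lambda>h n. h \<otimes> n) hs ns))
       = int (card N) * (\<Sum>ns\<in>tuples N m. f (hd hs # map2 (\<lambda>h n. h \<otimes> n) (tl hs) ns))"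
proof -
  obtain h1 hs' where hs1: "hs = h1 # hs'" "h1 \<in> H" "set hs' \<subseteq> H" "length hs' = m"
    using hs by (cases hs) (auto simp: tuples_def)
  define C where "C = (\<Sum>ns\<in>tuples N m. f (h1 # map2 (\<lambda>h n. h \<otimes> n) hs' ns))"
  have inner: "(\<Sum>ns\<in>tuples N m. f ((h1 \<otimes> n1) # map2 (\<lambda>h n. h \<otimes> n) hs' ns)) = C"
    if n1: "n1 \<in> N" for n1
  proof -
    have in1: "inv n1 \<in> N" by (rule subgroup.m_inv_closed[OF Nsg n1])
    have c: "n1 \<in> carrier G" "inv n1 \<in> carrier G" "h1 \<in> carrier G" using n1 hs1 Nsub Hsub by auto
    have "f ((h1 \<otimes> n1) # map2 (\<lambda>h n. h \<otimes> n) hs' ns) = f (h1 # map2 (\<lambda>h n. h \<otimes> n) hs' (map (\<lambda>x. inv n1 \<otimes> x) ns))"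
      if ns: "ns \<in> tuples N m" for ns
    proof -
      have nsN: "set ns \<subseteq> N" "length ns = m" using ns by (auto simp: tuples_def)
      have "h1 \<otimes> n1 \<in> carrier G" using c by simp
      moreover have "map2 (\<lambda>h n. h \<otimes> n) hs' ns \<in> tuples (carrier G) m"
        using map2_in[OF hs1(3) nsN(1)] hs1(4) nsN(2) by simp
      ultimately have T: "(h1 \<otimes> n1) # map2 (\<lambda>h n. h \<otimes> n) hs' ns \<in> tuples (carrier G) (Suc m)"
        by (auto simp: tuples_def)
      have "f ((h1 \<otimes> n1) # map2 (\<lambda>h n. h \<otimes> n) hs' ns)
          = f (map (\<lambda>s. inv n1 \<otimes> s) ((h1 \<otimes> n1) # map2 (\<lambda>h n. h \<otimes> n) hs' ns))"
        using bspec[OF bspec[OF inv c(2)] T] by (rule sym)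
      also have "map (\<lambda>s. inv n1 \<otimes> s) ((h1 \<otimes> n1) # map2 (\<lambda>h n. h \<otimes> n) hs' ns)
          = h1 # map2 (\<lambda>h n. h \<otimes> n) hs' (map (\<lambda>x. inv n1 \<otimes> x) ns)"
      proof -
        have "inv n1 \<otimes> (h1 \<otimes> n1) = h1 \<otimes> (inv n1 \<otimes> n1)" by (rule shift[OF in1 hs1(2) n1])
        also have "\<dots> = h1" using c by simp
        finally show ?thesis using map_shift[OF in1 hs1(3) nsN(1)] by simp
      qed
      finally show ?thesis .
    qed
    then have "(\<Sum>ns\<in>tuples N m. f ((h1 \<otimes> n1) # map2 (\<lambda>h n. h \<otimes> n) hs' ns))
        = (\<Sum>ns\<in>tuples N m. f (h1 # map2 (\<lambda>h n. h \<otimes> n) hs' (map (\<lambda>x. inv n1 \<otimes> x) ns)))"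
      by (rule sum.cong[OF refl])
    also have "\<dots> = C" unfolding C_def
      by (rule sum_tuples_reindex[OF bij_mult_N[OF in1], of "\<lambda>ns. f (h1 # map2 (\<lambda>h n. h \<otimes> n) hs' ns)"])
    finally show ?thesis .
  qed
  have "(\<Sum>ns\<in>tuples N (Suc m). f (map2 (\<lambda>h n. h \<otimes> n) hs ns))
      = (\<Sum>n1\<in>N. \<Sum>ns\<in>tuples N m. f ((h1 \<otimes> n1) # map2 (\<lambda>h n. h \<otimes> n) hs' ns))"
    unfolding tuples_Suc_sum[OF finN[OF fin]] hs1(1) by simp
  also have "\<dots> = (\<Sum>n1\<in>N. C)" using inner by (rule sum.cong[OF refl])
  also have "\<dots> = int (card N) * C" by simp
  finally show ?thesis unfolding C_def hs1(1) by simp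
qed

lemma card_rcosets:
  assumes fin: "finite (carrier G)"
  shows "card (rcosets H) = card N"
proof -
  have "card (carrier G) = (\<Sum>h\<in>H. \<Sum>n\<in>N. (1::nat))"
    using sum_G[of "\<lambda>_. 1::nat"] by simp
  then have cg: "card (carrier G) = card H * card N" by simp
  have l: "card (rcosets H) * card H = card (carrier G)"
    using lagrange[OF Hsg] by (simp add: order_def)
  have "\<one> \<in> H" by (rule subgroup.one_closed[OF Hsg])
  then have "card H > 0" using finH[OF fin] card_gt_0_iff by blast
  then show ?thesis using l cg by simp
qed

lemma proj_map2:
  assumes "set hs \<subseteq> H" "set ns \<subseteq> N" "length hs = length ns"
  shows "map (dp_proj G H N) (map2 (\<lambda>h n. h \<otimes> n) hs ns) = hs"
  using assms
proof (induction hs arbitrary: ns)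
  case Nil then show ?case by simp
next
  case (Cons h hs)
  then obtain n ns' where ns: "ns = n # ns'" by (cases ns) auto
  then show ?case using Cons.IH[of ns'] Cons.prems proj by auto
qed

lemma main:
  assumes fin: "finite (carrier G)" and i2: "i \<ge> 2"
    and finv: "\<forall>g\<in>carrier G. \<forall>xs\<in>tuples (carrier G) i. f (map (\<lambda>s. g \<otimes> s) xs) = f xs"
    and pinv: "\<forall>g\<in>H. \<forall>xs\<in>tuples H (Suc i). \<psi> (map (\<lambda>s. g \<otimes> s) xs) = \<psi> xs"
    and x: "x \<in> carrier G"
  shows "(\<Sum>ts\<in>tuples (carrier G) i. f ts * \<psi> (map (dp_proj G H N) (rev ts @ [x])))
       = int (card N) * (\<Sum>hs\<in>tuples H i. tate_rsd G N i f hs * \<psi> (rev hs @ [\<one>]))"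
proof -
  define \<pi> where "\<pi> = dp_proj G H N"
  define h where "h = \<pi> x"
  have hH: "h \<in> H" unfolding h_def \<pi>_def using proj_in[OF x] .
  have hG: "h \<in> carrier G" using hH Hsub by auto
  define K where "K ts = f ts * \<psi> (map \<pi> (rev ts) @ [\<one>])" for ts
  have A: "f (map (\<lambda>s. h \<otimes> s) ts) * \<psi> (map \<pi> (rev (map (\<lambda>s. h \<otimes> s) ts) @ [x])) = K ts"
    if ts: "ts \<in> tuples (carrier G) i" for ts
  proof -
    have tsG: "set ts \<subseteq> carrier G" "length ts = i" using ts by (auto simp: tuples_def)
    have e1: "map \<pi> (rev (map (\<lambda>s. h \<otimes> s) ts) @ [x]) = map (\<lambda>s. h \<otimes> s) (map \<pi> (rev ts) @ [\<one>])"
    proof -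
      have "map \<pi> (rev (map (\<lambda>s. h \<otimes> s) ts)) = map (\<lambda>s. h \<otimes> s) (map \<pi> (rev ts))"
        using tsG(1) proj_mult[OF hH] unfolding \<pi>_def by (auto simp: rev_map)
      moreover have "\<pi> x = h \<otimes> \<one>" using hG h_def by simp
      ultimately show ?thesis by simp
    qed
    have mem: "map \<pi> (rev ts) @ [\<one>] \<in> tuples H (Suc i)"
      using tsG proj_in subgroup.one_closed[OF Hsg] unfolding \<pi>_def by (auto simp: tuples_def)
    have "f (map (\<lambda>s. h \<otimes> s) ts) = f ts" using finv hG ts by blast
    moreover have "\<psi> (map (\<lambda>s. h \<otimes> s) (map \<pi> (rev ts) @ [\<one>])) = \<psi> (map \<pi> (rev ts) @ [\<one>])"
      using bspec[OF bspec[OF pinv hH] mem] .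
    ultimately show ?thesis unfolding K_def e1 by simp
  qed
  have "(\<Sum>ts\<in>tuples (carrier G) i. f ts * \<psi> (map \<pi> (rev ts @ [x])))
      = (\<Sum>ts\<in>tuples (carrier G) i. f (map (\<lambda>s. h \<otimes> s) ts) * \<psi> (map \<pi> (rev (map (\<lambda>s. h \<otimes> s) ts) @ [x])))"
    using sum_tuples_reindex[OF bij_mult_G[OF hG], of "\<lambda>ts. f ts * \<psi> (map \<pi> (rev ts @ [x]))" i]
    by simp
  also have "\<dots> = (\<Sum>ts\<in>tuples (carrier G) i. K ts)" using A by (rule sum.cong[OF refl])
  also have "\<dots> = (\<Sum>hs\<in>tuples H i. \<Sum>ns\<in>tuples N i. K (map2 (\<lambda>h n. h \<otimes> n) hs ns))"
    by (rule sum_tuples_G[OF fin])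
  also have "\<dots> = (\<Sum>hs\<in>tuples H i. (\<Sum>ns\<in>tuples N i. f (map2 (\<lambda>h n. h \<otimes> n) hs ns)) * \<psi> (rev hs @ [\<one>]))"
  proof (rule sum.cong[OF refl])
    fix hs assume hs: "hs \<in> tuples H i"
    have "K (map2 (\<lambda>h n. h \<otimes> n) hs ns) = f (map2 (\<lambda>h n. h \<otimes> n) hs ns) * \<psi> (rev hs @ [\<one>])"
      if ns: "ns \<in> tuples N i" for ns
    proof -
      have "map \<pi> (map2 (\<lambda>h n. h \<otimes> n) hs ns) = hs"
        unfolding \<pi>_def using proj_map2 hs ns by (auto simp: tuples_def)
      then show ?thesis unfolding K_def by (simp add: rev_map[symmetric])
    qed
    then show "(\<Sum>ns\<in>tuples N i. K (map2 (\<lambda>h n. h \<otimes> n) hs ns))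
        = (\<Sum>ns\<in>tuples N i. f (map2 (\<lambda>h n. h \<otimes> n) hs ns)) * \<psi> (rev hs @ [\<one>])"
      by (simp add: sum_distrib_right)
  qed
  also have "\<dots> = (\<Sum>hs\<in>tuples H i. int (card N) * (tate_rsd G N i f hs * \<psi> (rev hs @ [\<one>])))"
  proof (rule sum.cong[OF refl])
    fix hs assume hs: "hs \<in> tuples H i"
    obtain m where m: "i = Suc m" using i2 by (cases i) auto
    have "(\<Sum>ns\<in>tuples N i. f (map2 (\<lambda>h n. h \<otimes> n) hs ns)) = int (card N) * tate_rsd G N i f hs"
      unfolding tate_rsd_def using nsum[OF fin, of m f hs] finv hs m by simp
    then show "(\<Sum>ns\<in>tuples N i. f (map2 (\<lambda>h n. h \<otimes> n) hs ns)) * \<psi> (rev hs @ [\<one>])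
        = int (card N) * (tate_rsd G N i f hs * \<psi> (rev hs @ [\<one>]))" by simp
  qed
  also have "\<dots> = int (card N) * (\<Sum>hs\<in>tuples H i. tate_rsd G N i f hs * \<psi> (rev hs @ [\<one>]))"
    by (simp add: sum_distrib_left)
  finally show ?thesis unfolding \<pi>_def .
qed

end

theorem lemma5:
  fixes G :: "('a, 'b) monoid_scheme" and H N :: "'a set" and i :: nat
    and f \<psi> :: "'a list \<Rightarrow> int"
  assumes "group G" and "finite (carrier G)"
    and "H \<lhd> G" and "N \<lhd> G" and "H \<inter> N = {\<one>\<^bsub>G\<^esub>}" and "H <#>\<^bsub>G\<^esub> N = carrier G"
    and "i \<ge> 2"
    and "tate_cocycle G (- int i) f"
    and "tate_cocycle (G\<lparr>carrier := H\<rparr>) (int i) \<psi>"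
  shows "tate_class G 0 (tate_cup G i f (tate_inf G H N \<psi>)) =
         tate_class G 0 (tate_cor0 G H (tate_cup (G\<lparr>carrier := H\<rparr>) i (tate_rsd G N i f) \<psi>))"
proof (rule class0_eq)
  interpret D: dprod G H N
    using assms(1,3,4,5,6) by (simp add: dprod_def dprod_axioms_def)
  have ar1: "tate_arity (- int i) = i" using assms(7) by (simp add: tate_arity_def)
  have ar2: "tate_arity (int i) = Suc i" by (simp add: tate_arity_def)
  have finv: "\<forall>g\<in>carrier G. \<forall>xs\<in>tuples (carrier G) i. f (map (\<lambda>s. g \<otimes>\<^bsub>G\<^esub> s) xs) = f xs"
    using assms(8) ar1 unfolding tate_cocycle_def tate_cochain_def by simp
  have pinv: "\<forall>g\<in>H. \<forall>xs\<in>tuples H (Suc i). \<psi> (map (\<lambda>s. g \<otimes>\<^bsub>G\<^esub> s) xs) = \<psi> xs"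
    using assms(9) ar2 unfolding tate_cocycle_def tate_cochain_def by simp
  fix x assume x: "x \<in> carrier G"
  have "tate_cup G i f (tate_inf G H N \<psi>) [x]
      = int (card N) * (\<Sum>hs\<in>tuples H i. tate_rsd G N i f hs * \<psi> (rev hs @ [\<one>\<^bsub>G\<^esub>]))"
    using D.main[OF assms(2,7) finv pinv x] unfolding tate_cup_def tate_inf_def by simp
  also have "\<dots> = tate_cor0 G H (tate_cup (G\<lparr>carrier := H\<rparr>) i (tate_rsd G N i f) \<psi>) [x]"
    unfolding tate_cor0_def tate_cup_def using D.card_rcosets[OF assms(2)] by simp
  finally show "tate_cup G i f (tate_inf G H N \<psi>) [x]
      = tate_cor0 G H (tate_cup (G\<lparr>carrier := H\<rparr>) i (tate_rsd G N i f) \<psi>) [x]" .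
qed

end
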